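(* Let $f\in\mathbb{C}[x_1]$ have exactly $t$ monomial terms and suppose $\mathrm{ArchTrop}(f)$ has exactly $3$ points. Then $$\sup_{\sigma\in\mathrm{ArchTrop}(f)}\ \inf_{\rho\in\mathrm{Amoeba}(f)}|\rho-\sigma|\le1+3\log(t-1).$$
   Context: For $f(x_1)=\sum_{i=1}^tc_ix_1^{a_i}$ (distinct $a_i$, $c_i\ne0$), $\mathrm{ArchNewt}(f)=\mathrm{Conv}\{(a_i,-\log|c_i|)\}\subset\mathbb{R}^2$ and $\mathrm{ArchTrop}(f)$ is the set of $v\in\mathbb{R}$ such that $(v,-1)$ is an outer normal of an edge of $\mathrm{ArchNewt}(f)$ (the slopes of the lower edges). $\mathrm{Amoeba}(f)=\{\log|\zeta|:\zeta\in\mathbb{C}^*,f(\zeta)=0\}$. *)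

theory Defs
  imports "HOL-Analysis.Analysis" "HOL-Computational_Algebra.Polynomial"
begin

definition supp :: "complex poly \<Rightarrow> nat set" where
  "supp f = {i. coeff f i \<noteq> 0}"

definition ArchNewt :: "complex poly \<Rightarrow> (real \<times> real) set" where
  "ArchNewt f = convex hull ((\<lambda>i. (real i, - ln (cmod (coeff f i)))) ` supp f)"

text \<open>(v,-1) is an outer normal of an edge of ArchNewt f: the face of ArchNewt f
  on which the linear functional (x,y) |-> v*x - y attains its maximum contains
  two distinct points (hence, the polytope being at most 2-dimensional and the
  functional nonzero, is an edge).\<close>
definition ArchTrop :: "complex poly \<Rightarrow> real set" where
  "ArchTrop f = {v. \<exists>p\<in>ArchNewt f. \<exists>q\<in>ArchNewt f. p \<noteq> q \<and>
      (\<forall>r\<in>ArchNewt f. v * fst r - snd r \<le> v * fst p - snd p) \<and>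
      (\<forall>r\<in>ArchNewt f. v * fst r - snd r \<le> v * fst q - snd q)}"

definition Amoeba :: "complex poly \<Rightarrow> real set" where
  "Amoeba f = {ln (cmod z) | z. z \<noteq> 0 \<and> poly f z = 0}"

end

theory Submission
  imports Defs "HOL-Computational_Algebra.Fundamental_Theorem_Algebra"
begin


definition CL :: "real \<Rightarrow> (complex \<Rightarrow> complex) \<Rightarrow> bool" where
 "CL \<rho> h \<longleftrightarrow> (\<exists>g. continuous_on (sphere 0 \<rho>) g \<and> (\<forall>y\<in>sphere 0 \<rho>. h y = exp (g y)))"

lemma CL_mult: "CL \<rho> a \<Longrightarrow> CL \<rho> b \<Longrightarrow> CL \<rho> (\<lambda>y. a y * b y)"
  unfolding CL_def
proof (elim exE conjE)
  fix ga gb assume "continuous_on (sphere 0 \<rho>) ga" "\<forall>y\<in>sphere 0 \<rho>. a y = exp (ga y)"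
    "continuous_on (sphere 0 \<rho>) gb" "\<forall>y\<in>sphere 0 \<rho>. b y = exp (gb y)"
  then show "\<exists>g. continuous_on (sphere 0 \<rho>) g \<and> (\<forall>y\<in>sphere 0 \<rho>. a y * b y = exp (g y))"
    by (intro exI[of _ "\<lambda>y. ga y + gb y"]) (auto intro!: continuous_intros simp: exp_add)
qed

lemma CL_inverse: "CL \<rho> a \<Longrightarrow> CL \<rho> (\<lambda>y. inverse (a y))"
  unfolding CL_def
proof (elim exE conjE)
  fix ga assume "continuous_on (sphere 0 \<rho>) ga" "\<forall>y\<in>sphere 0 \<rho>. a y = exp (ga y)"
  then show "\<exists>g. continuous_on (sphere 0 \<rho>) g \<and> (\<forall>y\<in>sphere 0 \<rho>. inverse (a y) = exp (g y))"
    by (intro exI[of _ "\<lambda>y. - ga y"]) (auto intro!: continuous_intros simp: exp_minus)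
qed

lemma CL_const: "c \<noteq> 0 \<Longrightarrow> CL \<rho> (\<lambda>_. c)"
  unfolding CL_def by (intro exI[of _ "\<lambda>_. Ln c"]) (auto intro!: continuous_intros)

lemma CL_ball:
  assumes "continuous_on (sphere 0 \<rho>) h" "\<And>y. y \<in> sphere 0 \<rho> \<Longrightarrow> norm (h y - 1) < 1"
  shows "CL \<rho> h"
proof -
  have nn: "h y \<notin> \<real>\<^sub>\<le>\<^sub>0" if "y \<in> sphere 0 \<rho>" for y
  proof
    assume "h y \<in> \<real>\<^sub>\<le>\<^sub>0"
    then obtain r where r: "h y = of_real r" "r \<le> 0" by (auto elim: nonpos_Reals_cases)
    have "h y - 1 = complex_of_real (r - 1)" using r by simp
    then have "norm (h y - 1) = \<bar>r - 1\<bar>" by (simp only: norm_of_real)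
    with assms(2)[OF that] r show False by simp
  qed
  then have nz: "h y \<noteq> 0" if "y \<in> sphere 0 \<rho>" for y using nn[OF that] by (metis nonpos_Reals_zero_I)
  show ?thesis unfolding CL_def
    by (intro exI[of _ "\<lambda>y. Ln (h y)"]) (auto intro!: continuous_intros assms(1) nn simp: exp_Ln nz)
qed

lemma CL_prod_list:
  assumes "\<And>a. a \<in> set xs \<Longrightarrow> CL \<rho> (F a)"
  shows "CL \<rho> (\<lambda>y. prod_list (map (\<lambda>a. F a y) xs))"
  using assms
proof (induction xs)
  case Nil then show ?case using CL_const[of 1] by simp
next
  case (Cons a xs) then show ?case by (simp add: CL_mult)
qed

lemma NoCL:
  assumes "\<rho> > 0" "d > 0"
  shows "\<not> CL \<rho> (\<lambda>y. y ^ d)"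
proof
  assume "CL \<rho> (\<lambda>y. y ^ d)"
  then obtain g :: "complex \<Rightarrow> complex" where gc: "continuous_on (sphere 0 \<rho>) g" and ge0: "\<forall>y\<in>sphere 0 \<rho>. y ^ d = exp (g y)"
    unfolding CL_def by blast
  have ge: "y ^ d = exp (g y)" if "y\<in>sphere 0 \<rho>" for y using ge0 that by blast
  define F where "F \<theta> = g (complex_of_real \<rho> * cis \<theta>) - complex_of_real (real d * ln \<rho>) - \<i> * complex_of_real (real d * \<theta>)" for \<theta>
  have sph: "complex_of_real \<rho> * cis \<theta> \<in> sphere 0 \<rho>" for \<theta>
    using assms(1) by (simp add: norm_mult)
  have Fc: "continuous_on {0..2*pi} F"
    unfolding F_def
    by (intro continuous_intros continuous_on_compose2[OF gc]) (use sph in auto)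
  have e1: "exp (F \<theta>) = 1" for \<theta>
  proof -
    have "exp (g (complex_of_real \<rho> * cis \<theta>)) = (complex_of_real \<rho> * cis \<theta>) ^ d"
      using ge[OF sph] by simp
    also have "\<dots> = complex_of_real (\<rho> ^ d) * cis (real d * \<theta>)"
      by (simp only: power_mult_distrib Complex.DeMoivre of_real_power)
    finally have a: "exp (g (complex_of_real \<rho> * cis \<theta>)) = complex_of_real (\<rho> ^ d) * cis (real d * \<theta>)" .
    have b: "exp (complex_of_real (real d * ln \<rho>)) = complex_of_real (\<rho> ^ d)"
      using assms(1) by (simp add: exp_of_real exp_ln flip: ln_realpow)
    have c: "exp (\<i> * complex_of_real (real d * \<theta>)) = cis (real d * \<theta>)"
      by (simp add: cis_conv_exp)
    have "cis (real d * \<theta>) \<noteq> 0" by simp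
    moreover have "complex_of_real (\<rho> ^ d) \<noteq> 0" using assms(1) by simp
    ultimately show ?thesis unfolding F_def exp_diff a b c by simp
  qed
  have Fint: "\<exists>n::int. F \<theta> = \<i> * complex_of_real (2 * pi * of_int n)" for \<theta>
  proof -
    from e1[of \<theta>] obtain n :: int where "Re (F \<theta>) = 0" "Im (F \<theta>) = of_int (2*n) * pi"
      unfolding exp_eq_1 by blast
    then show ?thesis by (intro exI[of _ n]) (simp add: complex_eq_iff)
  qed
  have "F constant_on {0..2*pi}"
  proof (rule continuous_discrete_range_constant[OF _ Fc])
    show "connected {0..2*pi}" by simp
    fix x assume "x \<in> {0..2*pi}"
    show "\<exists>e>0. \<forall>y. y \<in> {0..2*pi} \<and> F y \<noteq> F x \<longrightarrow> e \<le> norm (F y - F x)"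
    proof (intro exI[of _ "2*pi"] conjI allI impI)
      show "0 < 2*pi" by simp
      fix y assume "y \<in> {0..2*pi} \<and> F y \<noteq> F x"
      then have ne: "F y \<noteq> F x" by blast
      obtain n m :: int where n: "F y = \<i> * complex_of_real (2 * pi * of_int n)"
        and m: "F x = \<i> * complex_of_real (2 * pi * of_int m)" using Fint by blast
      have "n \<noteq> m" using ne n m by auto
      then have "1 \<le> \<bar>real_of_int n - of_int m\<bar>" by (metis of_int_diff of_int_1_le_iff of_int_abs zero_less_abs_iff zless_imp_add1_zle add.left_neutral eq_iff_diff_eq_0)
      have "F y - F x = \<i> * complex_of_real (2 * pi * (of_int n - of_int m))"
        using n m by (simp add: algebra_simps)
      then have "norm (F y - F x) = 2 * pi * \<bar>real_of_int n - of_int m\<bar>"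
        by (simp only: norm_mult norm_ii norm_of_real abs_mult) simp
      with \<open>1 \<le> _\<close> show "2*pi \<le> norm (F y - F x)" by (simp add: mult_le_cancel_left1)
    qed
  qed
  then have "F 0 = F (2*pi)" unfolding constant_on_def by auto
  then have "\<i> * complex_of_real (real d * (2*pi)) = 0" unfolding F_def by simp
  then show False using assms(2) by simp
qed



lemma poly_factor_list:
  fixes p :: "complex poly"
  assumes "p \<noteq> 0"
  shows "\<exists>c as. c \<noteq> 0 \<and> (\<forall>a\<in>set as. poly p a = 0) \<and> (\<forall>y. poly p y = c * prod_list (map (\<lambda>a. y - a) as))"
  using assms
proof (induction "degree p" arbitrary: p)
  case 0
  then obtain c where "p = [:c:]" by (metis degree_eq_zeroE)
  with 0 show ?case by (intro exI[of _ c] exI[of _ "[]"]) auto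
next
  case (Suc n)
  have "\<not> constant (poly p)" using Suc(2) by (simp add: constant_degree)
  then obtain a where a: "poly p a = 0" using fundamental_theorem_of_algebra by blast
  then obtain q where q: "p = [:-a, 1:] * q" using poly_eq_0_iff_dvd by (metis dvdE)
  have q0: "q \<noteq> 0" using Suc(3) q by auto
  have "degree p = degree [:-a, 1:] + degree q" unfolding q by (rule degree_mult_eq) (use q0 in auto)
  then have "degree p = 1 + degree q" by simp
  then have "n = degree q" using Suc(2) by simp
  from Suc(1)[OF this q0] obtain c as where c: "c \<noteq> 0" "\<forall>a\<in>set as. poly q a = 0"
    "\<forall>y. poly q y = c * prod_list (map (\<lambda>a. y - a) as)" by blast
  show ?case
  proof (intro exI[of _ c] exI[of _ "a # as"] conjI)
    show "c \<noteq> 0" by fact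
    show "\<forall>b\<in>set (a # as). poly p b = 0" using a c(2) q by auto
    show "\<forall>y. poly p y = c * prod_list (map (\<lambda>a. y - a) (a # as))"
    proof
      fix y
      have "poly p y = (y - a) * poly q y" unfolding q by (simp add: algebra_simps)
      then show "poly p y = c * prod_list (map (\<lambda>a. y - a) (a # as))" using c(3) by (simp add: mult_ac)
    qed
  qed
qed

lemma CL_cong: "CL \<rho> h \<Longrightarrow> (\<And>y. y \<in> sphere 0 \<rho> \<Longrightarrow> h y = h' y) \<Longrightarrow> CL \<rho> h'"
  unfolding CL_def by metis

lemma CL_nz: "CL \<rho> h \<Longrightarrow> y \<in> sphere 0 \<rho> \<Longrightarrow> h y \<noteq> 0"
  unfolding CL_def by fastforce

lemma prod_list_filter_split:
  fixes F :: "'a \<Rightarrow> 'b::comm_monoid_mult"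
  shows "prod_list (map F xs) = prod_list (map F (filter P xs)) * prod_list (map F (filter (\<lambda>x. \<not> P x) xs))"
  by (induction xs) (auto simp: mult_ac)

lemma prod_list_map_mult:
  fixes F G :: "'a \<Rightarrow> 'b::comm_monoid_mult"
  shows "prod_list (map (\<lambda>a. F a * G a) xs) = prod_list (map F xs) * prod_list (map G xs)"
  by (induction xs) (auto simp: mult_ac)

lemma prod_list_const: "prod_list (map (\<lambda>a. (y::'b::comm_monoid_mult)) xs) = y ^ length xs"
  by (induction xs) auto

lemma dom_count:
  fixes p :: "complex poly" and c ck :: complex and as :: "complex list"
  assumes r: "r > 0" and ck: "ck \<noteq> 0" and c: "c \<noteq> 0"
    and fac: "\<And>y. poly p y = c * prod_list (map (\<lambda>a. y - a) as)"
    and nr: "\<And>a. a \<in> set as \<Longrightarrow> norm a \<noteq> r"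
    and dom: "\<And>y. norm y = r \<Longrightarrow> norm (poly p y - ck * y ^ k) < norm (ck * y ^ k)"
  shows "k = length (filter (\<lambda>a. norm a < r) as)"
proof -
  define ins where "ins = filter (\<lambda>a. norm a < r) as"
  define outs where "outs = filter (\<lambda>a. \<not> norm a < r) as"
  define m where "m = length ins"
  have outs_gt: "norm a > r" if "a \<in> set outs" for a
    using that nr unfolding outs_def by force
  have outs_nz: "a \<noteq> 0" if "a \<in> set outs" for a using outs_gt[OF that] r by auto
  define K where "K = c * prod_list (map (\<lambda>a. - a) outs)"
  have K0: "K \<noteq> 0" unfolding K_def using c outs_nz by (auto simp: prod_list_zero_iff)
  define Q where "Q y = prod_list (map (\<lambda>a. 1 - a / y) ins) * prod_list (map (\<lambda>a. 1 - y / a) outs)" for y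
  have sph: "y \<in> sphere 0 r \<longleftrightarrow> norm y = r" for y by simp
  have eq: "poly p y = y ^ m * K * Q y" if "norm y = r" for y
  proof -
    have y0: "y \<noteq> 0" using that r by auto
    have "poly p y = c * (prod_list (map (\<lambda>a. y - a) ins) * prod_list (map (\<lambda>a. y - a) outs))"
      unfolding fac ins_def outs_def by (simp add: prod_list_filter_split[symmetric])
    also have "prod_list (map (\<lambda>a. y - a) ins) = prod_list (map (\<lambda>a. y * (1 - a / y)) ins)"
      using y0 by (intro arg_cong[where f=prod_list] map_cong) (auto simp: field_simps)
    also have "\<dots> = y ^ m * prod_list (map (\<lambda>a. 1 - a / y) ins)"
      unfolding prod_list_map_mult prod_list_const m_def ..
    also have "prod_list (map (\<lambda>a. y - a) outs) = prod_list (map (\<lambda>a. (- a) * (1 - y / a)) outs)"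
      using outs_nz by (intro arg_cong[where f=prod_list] map_cong) (auto simp: field_simps)
    also have "\<dots> = prod_list (map (\<lambda>a. - a) outs) * prod_list (map (\<lambda>a. 1 - y / a) outs)"
      unfolding prod_list_map_mult ..
    finally show ?thesis unfolding K_def Q_def by (simp add: mult_ac)
  qed
  have CLQ: "CL r Q"
  proof -
    have "CL r (\<lambda>y. prod_list (map (\<lambda>a. 1 - a / y) ins))"
    proof (rule CL_prod_list, rule CL_ball)
      fix a assume a: "a \<in> set ins"
      show "continuous_on (sphere 0 r) (\<lambda>y. 1 - a / y)"
        using r by (intro continuous_intros) auto
      fix y :: complex assume "y \<in> sphere 0 r"
      then show "norm (1 - a / y - 1) < 1" using a r unfolding ins_def by (auto simp: norm_divide)
    qed
    moreover have "CL r (\<lambda>y. prod_list (map (\<lambda>a. 1 - y / a) outs))"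
    proof (rule CL_prod_list, rule CL_ball)
      fix a assume a: "a \<in> set outs"
      show "continuous_on (sphere 0 r) (\<lambda>y. 1 - y / a)"
        using outs_nz[OF a] by (intro continuous_intros) auto
      fix y :: complex assume "y \<in> sphere 0 r"
      then show "norm (1 - y / a - 1) < 1" using outs_gt[OF a] r by (auto simp: norm_divide divide_less_eq)
    qed
    ultimately show ?thesis unfolding Q_def by (rule CL_mult)
  qed
  define H where "H y = poly p y / (ck * y ^ k)" for y
  have CLH: "CL r H"
  proof (rule CL_ball)
    show "continuous_on (sphere 0 r) H" unfolding H_def using r ck
      by (intro continuous_intros) auto
    fix y :: complex assume y: "y \<in> sphere 0 r"
    then have nz: "ck * y ^ k \<noteq> 0" using r ck by auto
    have "H y - 1 = (poly p y - ck * y ^ k) / (ck * y ^ k)" unfolding H_def using nz by (simp add: field_simps)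
    then show "norm (H y - 1) < 1" using dom[of y] y nz by (simp add: norm_divide divide_less_eq)
  qed
  have eq2: "y ^ m * K * Q y = ck * y ^ k * H y" if "norm y = r" for y
    using eq[OF that] that r ck unfolding H_def by auto
  show ?thesis
  proof (rule ccontr)
    assume "k \<noteq> length (filter (\<lambda>a. norm a < r) as)"
    then have ne: "k \<noteq> m" unfolding m_def ins_def by simp
    show False
    proof (cases "m > k")
      case True
      have "CL r (\<lambda>y. (ck / K) * (H y * inverse (Q y)))"
        using CLH CLQ K0 ck by (intro CL_mult CL_const CL_inverse) auto
      then have "CL r (\<lambda>y. y ^ (m - k))"
      proof (rule CL_cong)
        fix y :: complex assume y: "y \<in> sphere 0 r"
        have y0: "y \<noteq> 0" using y r by auto
        have Q0: "Q y \<noteq> 0" using CL_nz[OF CLQ y] .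
        have "y ^ m = y ^ k * y ^ (m - k)" using True by (simp flip: power_add)
        then have "y ^ k * (y ^ (m - k) * K * Q y) = y ^ k * (ck * H y)" using eq2[of y] y by (simp add: mult_ac)
        then have "y ^ (m - k) * K * Q y = ck * H y" using y0 by simp
        then show "ck / K * (H y * inverse (Q y)) = y ^ (m - k)" using K0 Q0 by (simp add: field_simps)
      qed
      with NoCL[OF r, of "m - k"] True show False by simp
    next
      case False
      then have km: "k > m" using ne by simp
      have H0: "H y \<noteq> 0" if "y \<in> sphere 0 r" for y using CL_nz[OF CLH that] .
      have "CL r (\<lambda>y. (K / ck) * (Q y * inverse (H y)))"
        using CLH CLQ K0 ck by (intro CL_mult CL_const CL_inverse) auto
      then have "CL r (\<lambda>y. y ^ (k - m))"
      proof (rule CL_cong)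
        fix y :: complex assume y: "y \<in> sphere 0 r"
        have y0: "y \<noteq> 0" using y r by auto
        have "y ^ k = y ^ m * y ^ (k - m)" using km by (simp flip: power_add)
        then have "y ^ m * (K * Q y) = y ^ m * (ck * y ^ (k - m) * H y)" using eq2[of y] y by (simp add: mult_ac)
        then have "K * Q y = ck * y ^ (k - m) * H y" using y0 by simp
        then show "K / ck * (Q y * inverse (H y)) = y ^ (k - m)" using ck H0[OF y] by (simp add: field_simps)
      qed
      with NoCL[OF r, of "k - m"] km show False by simp
    qed
  qed
qed



definition ell :: "(int \<Rightarrow> real) \<Rightarrow> int \<Rightarrow> real \<Rightarrow> real" where
  "ell w i v = w i + real_of_int i * v"
definition mx :: "int set \<Rightarrow> (int \<Rightarrow> real) \<Rightarrow> real \<Rightarrow> int \<Rightarrow> bool" where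
  "mx S w v i \<longleftrightarrow> i \<in> S \<and> (\<forall>j\<in>S. ell w j v \<le> ell w i v)"
definition BP :: "int set \<Rightarrow> (int \<Rightarrow> real) \<Rightarrow> real set" where
  "BP S w = {v. \<exists>i j. i \<noteq> j \<and> mx S w v i \<and> mx S w v j}"
definition dm :: "int set \<Rightarrow> (int \<Rightarrow> real) \<Rightarrow> real \<Rightarrow> int \<Rightarrow> bool" where
  "dm S w u k \<longleftrightarrow> k \<in> S \<and> (\<Sum>i\<in>S-{k}. exp (ell w i u)) < exp (ell w k u)"

lemma ell_diff: "ell w a u - ell w b u = (ell w a c - ell w b c) + real_of_int (a - b) * (u - c)"
  unfolding ell_def by (simp add: algebra_simps)

lemma mx_exists:
  assumes "finite S" "S \<noteq> {}"
  shows "\<exists>i. mx S w v i"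
proof -
  have "Max ((\<lambda>j. ell w j v) ` S) \<in> (\<lambda>j. ell w j v) ` S"
    using Max_in[of "(\<lambda>j. ell w j v) ` S"] assms by auto
  then obtain i where "i \<in> S" "ell w i v = Max ((\<lambda>j. ell w j v) ` S)" by auto
  then show ?thesis unfolding mx_def using assms by (intro exI[of _ i]) auto
qed

lemma lin_between:
  fixes a b v1 v2 v :: real
  assumes "a + b * v1 \<ge> 0" "a + b * v2 \<ge> 0" "v1 \<le> v" "v \<le> v2"
  shows "a + b * v \<ge> 0"
proof (cases "b \<ge> 0")
  case True
  then have "b * v1 \<le> b * v" using assms by (simp add: mult_left_mono)
  then show ?thesis using assms by simp
next
  case False
  then have "b * v2 \<le> b * v" using assms by (simp add: mult_left_mono_neg)
  then show ?thesis using assms by simp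
qed

lemma mx_between:
  assumes "mx S w v1 k" "mx S w v2 k" "v1 \<le> v" "v \<le> v2"
  shows "mx S w v k"
  unfolding mx_def
proof (intro conjI ballI)
  show "k \<in> S" using assms(1) unfolding mx_def by auto
  fix j assume j: "j \<in> S"
  have "(w k - w j) + real_of_int (k - j) * v \<ge> 0"
  proof (rule lin_between[OF _ _ assms(3,4)])
    show "(w k - w j) + real_of_int (k - j) * v1 \<ge> 0" using assms(1) j unfolding mx_def ell_def by (auto simp: algebra_simps)
    show "(w k - w j) + real_of_int (k - j) * v2 \<ge> 0" using assms(2) j unfolding mx_def ell_def by (auto simp: algebra_simps)
  qed
  then show "ell w j v \<le> ell w k v" unfolding ell_def by (simp add: algebra_simps)
qed

lemma mx_mono:
  assumes "mx S w v1 j" "mx S w v2 k" "v1 < v2"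
  shows "j \<le> k"
proof (rule ccontr)
  assume "\<not> j \<le> k"
  then have jk: "real_of_int (j - k) > 0" by simp
  have "ell w k v1 \<le> ell w j v1" "ell w j v2 \<le> ell w k v2"
    using assms(1,2) unfolding mx_def by auto
  then have "real_of_int (j - k) * (v2 - v1) \<le> 0" unfolding ell_def by (simp add: algebra_simps)
  moreover have "real_of_int (j - k) * (v2 - v1) > 0" using jk assms(3) by simp
  ultimately show False by simp
qed

lemma NB:
  assumes fin: "finite S"
  shows "v1 \<le> v2 \<Longrightarrow> (\<forall>v. v1 \<le> v \<and> v \<le> v2 \<longrightarrow> v \<notin> BP S w) \<Longrightarrow> mx S w v1 j \<Longrightarrow> mx S w v2 k \<Longrightarrow> j = k"
proof (induction "nat (k - j)" arbitrary: v2 k rule: less_induct)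
  case less
  note le = less.prems(1) and free = less.prems(2) and mj = less.prems(3) and mk = less.prems(4)
  have jk: "j \<le> k"
  proof (cases "v1 = v2")
    case True
    show ?thesis
    proof (rule ccontr)
      assume "\<not> j \<le> k"
      then have "v1 \<in> BP S w" unfolding BP_def using mj mk True by (intro CollectI exI[of _ j] exI[of _ k]) auto
      then show False using free le by auto
    qed
  next
    case False
    then show ?thesis using mx_mono[OF mj mk] le by simp
  qed
  show "j = k"
  proof (rule ccontr)
    assume "j \<noteq> k"
    with jk have jk': "j < k" by simp
    define c where "c = (w j - w k) / real_of_int (k - j)"
    have kj0: "real_of_int (k - j) > 0" using jk' by simp
    have ec: "ell w j c = ell w k c" unfolding c_def ell_def using kj0
      by (simp add: field_simps)
    have "ell w k v1 \<le> ell w j v1" using mj mk unfolding mx_def by auto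
    then have "real_of_int (k - j) * v1 \<le> w j - w k" unfolding ell_def by (simp add: algebra_simps)
    then have v1c: "v1 \<le> c" unfolding c_def using kj0 by (simp add: field_simps)
    have "ell w j v2 \<le> ell w k v2" using mj mk unfolding mx_def by auto
    then have "real_of_int (k - j) * v2 \<ge> w j - w k" unfolding ell_def by (simp add: algebra_simps)
    then have cv2: "c \<le> v2" unfolding c_def using kj0 by (simp add: field_simps)
    have jS: "j \<in> S" "k \<in> S" using mj mk unfolding mx_def by auto
    obtain h where mh: "mx S w c h" using mx_exists[OF fin] jS by blast
    have hS: "h \<in> S" using mh unfolding mx_def by auto
    have hj: "ell w j c < ell w h c"
    proof (rule ccontr)
      assume "\<not> ell w j c < ell w h c"
      then have "ell w j c \<ge> ell w h c" by simp
      then have "mx S w c j" "mx S w c k" using mh jS ec unfolding mx_def by auto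
      then have "c \<in> BP S w" unfolding BP_def using \<open>j \<noteq> k\<close> by blast
      then show False using free v1c cv2 le by auto
    qed
    have "ell w h v1 \<le> ell w j v1" using mj hS unfolding mx_def by auto
    with hj have "real_of_int (h - j) * (c - v1) > 0"
      using ell_diff[of w h c j v1] by linarith
    then have hgt: "h > j"
    proof -
      assume p: "real_of_int (h - j) * (c - v1) > 0"
      show "h > j"
      proof (rule ccontr)
        assume "\<not> h > j"
        then have "real_of_int (h - j) \<le> 0" by simp
        then have "real_of_int (h - j) * (c - v1) \<le> 0" using v1c by (simp add: mult_nonpos_nonneg)
        then show False using p by simp
      qed
    qed
    have "ell w h v2 \<le> ell w k v2" using mk hS unfolding mx_def by auto
    with hj ec have "real_of_int (h - k) * (v2 - c) < 0"
      using ell_diff[of w h v2 k c] by linarith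
    then have hlt: "h < k"
    proof -
      assume p: "real_of_int (h - k) * (v2 - c) < 0"
      show "h < k"
      proof (rule ccontr)
        assume "\<not> h < k"
        then have "real_of_int (h - k) \<ge> 0" by simp
        then have "real_of_int (h - k) * (v2 - c) \<ge> 0" using cv2 by simp
        then show False using p by simp
      qed
    qed
    have "j = h"
    proof (rule less.hyps[of h c])
      show "nat (h - j) < nat (k - j)" using hgt hlt by simp
      show "v1 \<le> c" by fact
      show "\<forall>v. v1 \<le> v \<and> v \<le> c \<longrightarrow> v \<notin> BP S w" using free cv2 by auto
      show "mx S w v1 j" by fact
      show "mx S w c h" by fact
    qed
    then show False using hgt by simp
  qed
qed

lemma lin_closure:
  fixes a b \<alpha> \<beta> :: real
  assumes "a < b" "\<And>v. a < v \<Longrightarrow> v < b \<Longrightarrow> 0 \<le> \<alpha> + \<beta> * v" "a \<le> v" "v \<le> b"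
  shows "0 \<le> \<alpha> + \<beta> * v"
proof -
  have "{a<..<b} \<subseteq> {v. 0 \<le> \<alpha> + \<beta> * v}" using assms(2) by auto
  moreover have "closed {v::real. 0 \<le> \<alpha> + \<beta> * v}" by (intro closed_Collect_le continuous_intros)
  ultimately have "closure {a<..<b} \<subseteq> {v. 0 \<le> \<alpha> + \<beta> * v}" by (rule closure_minimal)
  then show ?thesis using assms(1,3,4) closure_greaterThanLessThan[of a b] by auto
qed

lemma mx_closure:
  assumes "a < b" "\<And>v. a < v \<Longrightarrow> v < b \<Longrightarrow> mx S w v k" "a \<le> v" "v \<le> b"
  shows "mx S w v k"
  unfolding mx_def
proof (intro conjI ballI)
  show "k \<in> S" using assms(2)[of "(a+b)/2"] assms(1) unfolding mx_def by auto
  fix j assume j: "j \<in> S"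
  have "0 \<le> (w k - w j) + real_of_int (k - j) * v"
  proof (rule lin_closure[OF assms(1) _ assms(3,4)])
    fix v assume "a < v" "v < b"
    then have "ell w j v \<le> ell w k v" using assms(2) j unfolding mx_def by auto
    then show "0 \<le> (w k - w j) + real_of_int (k - j) * v" unfolding ell_def by (simp add: algebra_simps)
  qed
  then show "ell w j v \<le> ell w k v" unfolding ell_def by (simp add: algebra_simps)
qed

lemma margin_left:
  assumes "mx S w (u - x) k" "i \<in> S"
  shows "ell w i u \<le> ell w k u - real_of_int (k - i) * x"
proof -
  have "ell w i (u - x) \<le> ell w k (u - x)" using assms unfolding mx_def by auto
  then show ?thesis using ell_diff[of w i u k "u - x"] by (simp add: algebra_simps)
qed

lemma margin_right:
  assumes "mx S w (u + y) k" "i \<in> S"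
  shows "ell w i u \<le> ell w k u - real_of_int (i - k) * y"
proof -
  have "ell w i (u + y) \<le> ell w k (u + y)" using assms unfolding mx_def by auto
  then show ?thesis using ell_diff[of w i u k "u + y"] by (simp add: algebra_simps)
qed

lemma geom_bound:
  fixes d :: "int \<Rightarrow> int" and z :: real
  assumes "finite A" "inj_on d A" "\<And>i. i \<in> A \<Longrightarrow> d i > 0" "z > 0"
  shows "(\<Sum>i\<in>A. exp (- (real_of_int (d i) * z))) \<le> 1 / (exp z - 1)"
proof -
  define q where "q = exp (- z)"
  have q: "0 < q" "q < 1" unfolding q_def using assms(4) by auto
  define g where "g i = nat (d i - 1)" for i
  have gi: "exp (- (real_of_int (d i) * z)) = q ^ Suc (g i)" if "i \<in> A" for i
  proof -
    have "real_of_int (d i) = real (Suc (g i))" using assms(3)[OF that] unfolding g_def by simp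
    then have "exp (- (real_of_int (d i) * z)) = exp (real (Suc (g i)) * (- z))" by simp
    also have "\<dots> = q ^ Suc (g i)" unfolding q_def by (rule exp_of_nat_mult)
    finally show ?thesis .
  qed
  have inj: "inj_on g A"
  proof (rule inj_onI)
    fix i j assume "i \<in> A" "j \<in> A" "g i = g j"
    then have "d i - 1 = d j - 1" using assms(3)[OF \<open>i \<in> A\<close>] assms(3)[OF \<open>j \<in> A\<close>] unfolding g_def by (simp add: eq_nat_nat_iff)
    then have "d i = d j" by simp
    then show "i = j" using assms(2) \<open>i \<in> A\<close> \<open>j \<in> A\<close> by (simp add: inj_on_def)
  qed
  have "(\<Sum>i\<in>A. exp (- (real_of_int (d i) * z))) = (\<Sum>i\<in>A. q ^ Suc (g i))" using gi by simp
  also have "\<dots> = (\<Sum>n\<in>g ` A. q ^ Suc n)" using sum.reindex[OF inj, of "\<lambda>n. q ^ Suc n"] by simp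
  also have "\<dots> \<le> (\<Sum>n. q ^ Suc n)"
  proof (rule sum_le_suminf)
    show "summable (\<lambda>n. q ^ Suc n)" using q by (simp add: summable_mult)
    show "finite (g ` A)" using assms(1) by simp
    show "\<And>m. m \<in> - g ` A \<Longrightarrow> 0 \<le> q ^ Suc m" using q by simp
  qed
  also have "(\<Sum>n. q ^ Suc n) = q / (1 - q)"
    using suminf_mult[of "\<lambda>n. q ^ n" q] q suminf_geometric[of q] summable_geometric[of q] by simp
  also have "q / (1 - q) = 1 / (exp z - 1)"
    unfolding q_def using assms(4) by (simp add: exp_minus field_simps)
  finally show ?thesis .
qed

lemma left_sum:
  assumes fin: "finite S" and m: "mx S w (u - x) k" and x: "x > 0"
  shows "(\<Sum>i\<in>{i\<in>S. i < k}. exp (ell w i u)) \<le> exp (ell w k u) * (1 / (exp x - 1))"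
proof -
  have "(\<Sum>i\<in>{i\<in>S. i < k}. exp (ell w i u)) \<le> (\<Sum>i\<in>{i\<in>S. i < k}. exp (ell w k u) * exp (- (real_of_int (k - i) * x)))"
  proof (rule sum_mono)
    fix i assume "i \<in> {i\<in>S. i < k}"
    then have "ell w i u \<le> ell w k u - real_of_int (k - i) * x" using margin_left[OF m] by auto
    then show "exp (ell w i u) \<le> exp (ell w k u) * exp (- (real_of_int (k - i) * x))"
      by (simp flip: exp_add)
  qed
  also have "\<dots> = exp (ell w k u) * (\<Sum>i\<in>{i\<in>S. i < k}. exp (- (real_of_int (k - i) * x)))"
    by (simp add: sum_distrib_left)
  also have "\<dots> \<le> exp (ell w k u) * (1 / (exp x - 1))"
    by (intro mult_left_mono geom_bound) (use fin x in \<open>auto simp: inj_on_def\<close>)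
  finally show ?thesis .
qed

lemma right_sum:
  assumes fin: "finite S" and m: "mx S w (u + y) k" and y: "y > 0"
  shows "(\<Sum>i\<in>{i\<in>S. k < i}. exp (ell w i u)) \<le> exp (ell w k u) * (1 / (exp y - 1))"
proof -
  have "(\<Sum>i\<in>{i\<in>S. k < i}. exp (ell w i u)) \<le> (\<Sum>i\<in>{i\<in>S. k < i}. exp (ell w k u) * exp (- (real_of_int (i - k) * y)))"
  proof (rule sum_mono)
    fix i assume "i \<in> {i\<in>S. k < i}"
    then have "ell w i u \<le> ell w k u - real_of_int (i - k) * y" using margin_right[OF m] by auto
    then show "exp (ell w i u) \<le> exp (ell w k u) * exp (- (real_of_int (i - k) * y))"
      by (simp flip: exp_add)
  qed
  also have "\<dots> = exp (ell w k u) * (\<Sum>i\<in>{i\<in>S. k < i}. exp (- (real_of_int (i - k) * y)))"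
    by (simp add: sum_distrib_left)
  also have "\<dots> \<le> exp (ell w k u) * (1 / (exp y - 1))"
    by (intro mult_left_mono geom_bound) (use fin y in \<open>auto simp: inj_on_def\<close>)
  finally show ?thesis .
qed

lemma sum_split_k:
  fixes S :: "int set" and k :: int
  assumes "finite S"
  shows "(\<Sum>i\<in>S-{k}. F i) = (\<Sum>i\<in>{i\<in>S. i < k}. F i) + (\<Sum>i\<in>{i\<in>S. k < i}. F i)"
proof -
  have e: "S - {k} = {i\<in>S. i < k} \<union> {i\<in>S. k < i}" by auto
  have "(\<Sum>i\<in>{i\<in>S. i < k} \<union> {i\<in>S. k < i}. F i) = (\<Sum>i\<in>{i\<in>S. i < k}. F i) + (\<Sum>i\<in>{i\<in>S. k < i}. F i)"
    by (rule sum.union_disjoint) (use assms in auto)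
  then show ?thesis unfolding e .
qed

lemma dm_interior:
  assumes fin: "finite S" and m1: "mx S w (u - x) k" and m2: "mx S w (u + y) k"
    and x: "exp x > 3" and y: "exp y > 3"
  shows "dm S w u k"
proof -
  have x0: "x > 0"
  proof (rule ccontr)
    assume "\<not> x > 0" then have "exp x \<le> 1" by simp
    then show False using x by linarith
  qed
  have y0: "y > 0"
  proof (rule ccontr)
    assume "\<not> y > 0" then have "exp y \<le> 1" by simp
    then show False using y by linarith
  qed
  have bx: "1 / (exp x - 1) < 1/2" using x x0 by (simp add: divide_less_eq)
  have byy: "1 / (exp y - 1) < 1/2" using y y0 by (simp add: divide_less_eq)
  have "(\<Sum>i\<in>S-{k}. exp (ell w i u)) \<le> exp (ell w k u) * (1 / (exp x - 1)) + exp (ell w k u) * (1 / (exp y - 1))"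
    unfolding sum_split_k[OF fin] using left_sum[OF fin m1 x0] right_sum[OF fin m2 y0] by linarith
  also have "\<dots> = exp (ell w k u) * (1 / (exp x - 1) + 1 / (exp y - 1))" by (simp add: algebra_simps)
  also have "\<dots> < exp (ell w k u) * 1" using bx byy by (intro mult_strict_left_mono) auto
  finally show ?thesis unfolding dm_def using m1 unfolding mx_def by simp
qed

lemma dm_end:
  assumes fin: "finite S" and m1: "mx S w (u - x) k" and top: "\<And>i. i \<in> S \<Longrightarrow> i \<le> k"
    and x: "exp x > 2"
  shows "dm S w u k"
proof -
  have x0: "x > 0"
  proof (rule ccontr)
    assume "\<not> x > 0" then have "exp x \<le> 1" by simp
    then show False using x by linarith
  qed
  have bx: "1 / (exp x - 1) < 1" using x x0 by (simp add: divide_less_eq)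
  have e: "{i\<in>S. k < i} = {}" using top by force
  have "(\<Sum>i\<in>S-{k}. exp (ell w i u)) \<le> exp (ell w k u) * (1 / (exp x - 1))"
    unfolding sum_split_k[OF fin] e using left_sum[OF fin m1 x0] by simp
  also have "\<dots> < exp (ell w k u) * 1" using bx by (intro mult_strict_left_mono) auto
  finally show ?thesis unfolding dm_def using m1 unfolding mx_def by simp
qed

lemma dm_strict:
  assumes fin: "finite S" and "dm S w u k" "i \<in> S" "i \<noteq> k"
  shows "ell w i u < ell w k u"
proof -
  have "exp (ell w i u) \<le> (\<Sum>i\<in>S-{k}. exp (ell w i u))"
    using assms by (intro member_le_sum) auto
  also have "\<dots> < exp (ell w k u)" using assms(2) unfolding dm_def by auto
  finally show ?thesis by simp
qed

lemma dm_distinct: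
  assumes fin: "finite S" and s: "\<sigma> \<in> BP S w" and "u < \<sigma>" "\<sigma> < u'" and d1: "dm S w u k" and d2: "dm S w u' k'"
  shows "k \<noteq> k'"
proof
  assume kk: "k = k'"
  from s obtain i j where ij: "i \<noteq> j" "mx S w \<sigma> i" "mx S w \<sigma> j" unfolding BP_def by auto
  obtain h where h: "h \<noteq> k" "mx S w \<sigma> h" using ij by metis
  have kS: "k \<in> S" using d1 unfolding dm_def by auto
  have hS: "h \<in> S" using h unfolding mx_def by auto
  have a: "ell w h \<sigma> \<ge> ell w k \<sigma>" using h kS unfolding mx_def by auto
  have b: "ell w h u < ell w k u" using dm_strict[OF fin d1 hS h(1)] .
  have c: "ell w h u' < ell w k u'" using dm_strict[OF fin d2 hS] h(1) kk by auto
  show False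
  proof (cases "h \<ge> k")
    case True
    have "real_of_int (h - k) * (\<sigma> - u') \<le> 0" using True assms(4) by (simp add: mult_nonneg_nonpos)
    then show False using a c ell_diff[of w h \<sigma> k u'] by linarith
  next
    case False
    have "real_of_int (h - k) * (\<sigma> - u) \<le> 0" using False assms(3) by (simp add: mult_nonpos_nonneg)
    then show False using a b ell_diff[of w h \<sigma> k u] by linarith
  qed
qed



lemma gap_mx:
  assumes fin: "finite S" and ap: "a < p" "p < b" and free: "\<forall>v. a < v \<and> v < b \<longrightarrow> v \<notin> BP S w"
    and mp: "mx S w p k" and v: "a < v" "v < b"
  shows "mx S w v k"
proof -
  have "S \<noteq> {}" using mp unfolding mx_def by auto
  then obtain k' where mk': "mx S w v k'" using mx_exists[OF fin] by blast
  show ?thesis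
  proof (cases "v \<le> p")
    case True
    have "k' = k" by (rule NB[OF fin True _ mk' mp]) (use free v ap True in auto)
    then show ?thesis using mk' by simp
  next
    case False
    have "k = k'" by (rule NB[OF fin _ _ mp mk']) (use free v ap False in auto)
    then show ?thesis using mk' by simp
  qed
qed

lemma gap_closed:
  assumes fin: "finite S" and ap: "a < p" "p < b" and free: "\<forall>v. a < v \<and> v < b \<longrightarrow> v \<notin> BP S w"
    and mp: "mx S w p k" and v: "a \<le> v" "v \<le> b"
  shows "mx S w v k"
  by (rule mx_closure[of a b]) (use ap v gap_mx[OF fin ap free mp] in auto)

lemma top_lemma:
  assumes m: "\<And>v. v \<ge> s \<Longrightarrow> mx S w v k" and i: "i \<in> S"
  shows "i \<le> k"
proof (rule ccontr)
  assume "\<not> i \<le> k"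
  then have ik: "real_of_int (i - k) \<ge> 1" by simp
  define v where "v = max s 0 + \<bar>w k - w i\<bar> + 1"
  have v: "v \<ge> s" "v \<ge> 0" unfolding v_def by auto
  have "real_of_int (i - k) * v \<ge> 1 * v" using ik v(2) by (intro mult_right_mono) auto
  moreover have "v > w k - w i" unfolding v_def by auto
  ultimately have "ell w i v > ell w k v" unfolding ell_def by (simp add: algebra_simps)
  moreover have "ell w i v \<le> ell w k v" using m[OF v(1)] i unfolding mx_def by auto
  ultimately show False by simp
qed

lemma strict_nonBP:
  assumes "mx S w p k" "p \<notin> BP S w" "h \<in> S" "h \<noteq> k"
  shows "ell w h p < ell w k p"
proof (rule ccontr)
  assume "\<not> ell w h p < ell w k p"
  then have "mx S w p h" using assms(1,3) unfolding mx_def by force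
  then have "p \<in> BP S w" unfolding BP_def using assms(1,4) by blast
  then show False using assms(2) by simp
qed

lemma not_same:
  assumes "p1 < \<sigma>" "\<sigma> < p2" "mx S w p1 k" "mx S w p2 k" "p1 \<notin> BP S w" "p2 \<notin> BP S w" "\<sigma> \<in> BP S w"
  shows False
proof -
  from assms(7) obtain i j where ij: "i \<noteq> j" "mx S w \<sigma> i" "mx S w \<sigma> j" unfolding BP_def by auto
  obtain h where h: "h \<noteq> k" "mx S w \<sigma> h" using ij by metis
  have kS: "k \<in> S" using assms(3) unfolding mx_def by auto
  have hS: "h \<in> S" using h unfolding mx_def by auto
  have a: "ell w h \<sigma> \<ge> ell w k \<sigma>" using h kS unfolding mx_def by auto
  have b: "ell w h p1 < ell w k p1" using strict_nonBP[OF assms(3,5) hS h(1)] .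
  have c: "ell w h p2 < ell w k p2" using strict_nonBP[OF assms(4,6) hS h(1)] .
  show False
  proof (cases "h \<ge> k")
    case True
    have "real_of_int (h - k) * (\<sigma> - p2) \<le> 0" using True assms(2) by (simp add: mult_nonneg_nonpos)
    then show False using a c ell_diff[of w h \<sigma> k p2] by linarith
  next
    case False
    have "real_of_int (h - k) * (\<sigma> - p1) \<le> 0" using False assms(1) by (simp add: mult_nonpos_nonneg)
    then show False using a b ell_diff[of w h \<sigma> k p1] by linarith
  qed
qed

lemma exp34: "exp (3/4::real) > 2"
proof -
  have "1 + 3/4 + (3/4)^2/2 \<le> exp (3/4::real)" by (rule exp_lower_Taylor_quadratic) simp
  then show ?thesis by (simp add: power2_eq_square)
qed

lemma exp1: "exp (1::real) > 2"
proof -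
  have "1 + 1 + 1^2/2 \<le> exp (1::real)" by (rule exp_lower_Taylor_quadratic) simp
  then show ?thesis by simp
qed

lemma ln_merged: "4 * ln 3 + 3/4 \<le> 1 + 3 * ln (4::real)"
proof -
  have "1 + 1/4 + (1/4)^2/2 \<le> exp (1/4::real)" by (rule exp_lower_Taylor_quadratic) simp
  then have "81/64 \<le> exp (1/4::real)" by (simp add: power2_eq_square)
  then have "ln (81/64) \<le> ln (exp (1/4::real))" by (subst ln_le_cancel_iff) auto
  then have "ln (81/64) \<le> (1/4::real)" by simp
  moreover have "ln (81/64::real) = 4 * ln 3 - 3 * ln 4"
  proof -
    have "ln (81/64::real) = ln 81 - ln 64" by (simp add: ln_div)
    moreover have "ln (81::real) = ln (3^4)" by simp
    moreover have "ln (64::real) = ln (4^3)" by simp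
    ultimately show ?thesis by (simp only: ln_realpow)
  qed
  ultimately show ?thesis by simp
qed

lemma mneg: "a < b \<Longrightarrow> 0 \<le> z \<Longrightarrow> real_of_int (a - b) * z \<le> - z"
proof -
  assume "a < b" "0 \<le> z"
  then have "real_of_int (a - b) \<le> -1" by simp
  then have "real_of_int (a - b) * z \<le> (-1) * z" using \<open>0 \<le> z\<close> by (rule mult_right_mono)
  then show ?thesis by simp
qed

lemma mneg2: "b < a \<Longrightarrow> z \<le> 0 \<Longrightarrow> real_of_int (a - b) * z \<le> z"
proof -
  assume "b < a" "z \<le> 0"
  then have "real_of_int (a - b) \<ge> 1" by simp
  then have "real_of_int (a - b) * z \<le> 1 * z" using \<open>z \<le> 0\<close> by (rule mult_right_mono_neg)
  then show ?thesis by simp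
qed

lemma dm4:
  assumes S: "S = {a, b, c, k}" and d: "a \<noteq> b" "a \<noteq> c" "a \<noteq> k" "b \<noteq> c" "b \<noteq> k" "c \<noteq> k"
    and la: "ell w a u \<le> ell w k u - p" and lb: "ell w b u \<le> ell w k u - q" and lc: "ell w c u \<le> ell w k u - r"
    and n: "exp (- p) + exp (- q) + exp (- r) < 1"
  shows "dm S w u k"
proof -
  have e: "S - {k} = {a, b, c}" using S d by auto
  have "(\<Sum>i\<in>S-{k}. exp (ell w i u)) = exp (ell w a u) + exp (ell w b u) + exp (ell w c u)"
    unfolding e using d by simp
  also have "\<dots> \<le> exp (ell w k u) * exp (- p) + exp (ell w k u) * exp (- q) + exp (ell w k u) * exp (- r)"
    using la lb lc by (intro add_mono) (simp_all flip: exp_add)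
  also have "\<dots> = exp (ell w k u) * (exp (- p) + exp (- q) + exp (- r))" by (simp add: algebra_simps)
  also have "\<dots> < exp (ell w k u) * 1" using n by (intro mult_strict_left_mono) auto
  finally show ?thesis unfolding dm_def using S by simp
qed

lemma interior_dom:
  assumes fin: "finite S" and ma: "mx S w a V" and mb: "mx S w b V" and g: "b - a > 2 * ln 3"
  shows "\<exists>u. a < u \<and> u \<le> a + ln 3 + 1/2 \<and> dm S w u V"
proof -
  define e where "e = min (1/2) ((b - a - 2 * ln 3) / 2)"
  have e1: "e \<le> (b - a - 2 * ln 3) / 2" "e \<le> 1/2" unfolding e_def by (rule min.cobounded2, rule min.cobounded1)
  have "0 < e" unfolding e_def using g by auto
  then have e: "0 < e" "e \<le> 1/2" "e < b - a - 2 * ln 3" using e1 g by auto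
  define u where "u = a + ln 3 + e"
  have l3: "ln (3::real) > 0" by simp
  have "dm S w u V"
  proof (rule dm_interior[OF fin, where x="ln 3 + e" and y="b - u"])
    show "mx S w (u - (ln 3 + e)) V" using ma unfolding u_def by simp
    show "mx S w (u + (b - u)) V" using mb by simp
    have "exp (ln 3 + e) = 3 * exp e" by (simp add: exp_add)
    moreover have "exp e > 1" using e by simp
    ultimately show "exp (ln 3 + e) > 3" by simp
    have "b - u > ln 3" unfolding u_def using e by simp
    then have "exp (b - u) > exp (ln 3)" by (rule exp_less_mono)
    then show "exp (b - u) > 3" by simp
  qed
  moreover have "a < u" "u \<le> a + ln 3 + 1/2" unfolding u_def using e l3 by linarith+
  ultimately show ?thesis by blast
qed

lemma numB:
  fixes g r :: real
  assumes "g > 3/2 * ln 3" "r > 3 * ln 3"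
  shows "2 * exp (- (g/2)) + exp (- r) < 1"
proof -
  have e27: "exp (- (3 * ln 3)) = (1/27::real)"
  proof -
    have "exp (3 * ln 3) = exp (ln (3::real)) ^ 3" by (subst exp_of_nat_mult[symmetric]) simp
    then have "exp (3 * ln 3) = (27::real)" by simp
    then show ?thesis by (simp add: exp_minus)
  qed
  define q where "q = exp (- (g/2))"
  have q0: "q > 0" unfolding q_def by simp
  have "q ^ 4 = exp (real 4 * (- (g/2)))" unfolding q_def by (rule exp_of_nat_mult[symmetric])
  also have "\<dots> < exp (- (3 * ln 3))" using assms(1) by simp
  finally have q4: "q ^ 4 < 1/27" using e27 by simp
  have q13: "q < 13/27"
  proof (rule ccontr)
    assume "\<not> q < 13/27"
    then have "(13/27::real) ^ 4 \<le> q ^ 4" by (intro power_mono) auto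
    moreover have "(13/27::real) ^ 4 > 1/27" by (simp add: power_divide)
    ultimately show False using q4 by simp
  qed
  have "exp (- r) < exp (- (3 * ln 3))" using assms(2) by simp
  then have "exp (- r) < 1/27" using e27 by simp
  then show ?thesis using q13 unfolding q_def by simp
qed

lemma numA: "exp (- 1) + exp (- 2) + exp (- 2) < (1::real)"
proof -
  have "exp (- 1) = 1 / exp (1::real)" by (simp add: exp_minus divide_inverse)
  then have a: "exp (- 1) < (1/2::real)" using exp1 by (simp add: divide_less_eq)
  have "exp (- 2::real) = exp (- 1) ^ 2" by (subst exp_of_nat_mult[symmetric]) simp
  also have "\<dots> < (1/2) ^ 2" using a by (intro power_strict_mono) auto
  finally show ?thesis using a by (simp add: power2_eq_square)
qed



lemma core_right:
  fixes S :: "int set" and w :: "int \<Rightarrow> real"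
  assumes fin: "finite S" and bp: "BP S w = {\<sigma>1, \<sigma>2, \<sigma>3}" and o12: "\<sigma>1 < \<sigma>2" and o23: "\<sigma>2 < \<sigma>3"
    and sig: "\<sigma> \<in> BP S w"
  shows "\<exists>u k. \<sigma> < u \<and> u \<le> \<sigma> + 1 + 3 * ln (real (card S) - 1) \<and> dm S w u k"
proof -
  have s1: "\<sigma>1 \<in> BP S w" using bp by auto
  then obtain i0 where "mx S w \<sigma>1 i0" unfolding BP_def by auto
  then have Sne: "S \<noteq> {}" unfolding mx_def by auto
  have notbp: "v \<notin> BP S w" if "v \<noteq> \<sigma>1" "v \<noteq> \<sigma>2" "v \<noteq> \<sigma>3" for v using that bp by auto
  define m12 where "m12 = (\<sigma>1 + \<sigma>2) / 2"
  define m23 where "m23 = (\<sigma>2 + \<sigma>3) / 2"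
  obtain V0 where mV0: "mx S w (\<sigma>1 - 1) V0" using mx_exists[OF fin Sne] by blast
  obtain V1 where mV1: "mx S w m12 V1" using mx_exists[OF fin Sne] by blast
  obtain V2 where mV2: "mx S w m23 V2" using mx_exists[OF fin Sne] by blast
  obtain V3 where mV3: "mx S w (\<sigma>3 + 1) V3" using mx_exists[OF fin Sne] by blast
  have V0c: "mx S w \<sigma>1 V0"
    by (rule gap_closed[OF fin _ _ _ mV0, of "\<sigma>1 - 2" "\<sigma>1"]) (use o12 o23 in \<open>auto simp: bp\<close>)
  have V1c: "mx S w v V1" if "\<sigma>1 \<le> v" "v \<le> \<sigma>2" for v
    by (rule gap_closed[OF fin _ _ _ mV1, of "\<sigma>1" "\<sigma>2"]) (use o12 o23 that in \<open>auto simp: bp m12_def\<close>)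
  have V2c: "mx S w v V2" if "\<sigma>2 \<le> v" "v \<le> \<sigma>3" for v
    by (rule gap_closed[OF fin _ _ _ mV2, of "\<sigma>2" "\<sigma>3"]) (use o12 o23 that in \<open>auto simp: bp m23_def\<close>)
  have V3c: "mx S w v V3" if "\<sigma>3 \<le> v" for v
    by (rule gap_closed[OF fin _ _ _ mV3, of "\<sigma>3" "max v (\<sigma>3 + 2)"]) (use o12 o23 that in \<open>auto simp: bp\<close>)
  have top: "i \<le> V3" if "i \<in> S" for i using top_lemma[OF V3c that] by blast
  have nb: "\<sigma>1 - 1 \<notin> BP S w" "m12 \<notin> BP S w" "m23 \<notin> BP S w" "\<sigma>3 + 1 \<notin> BP S w"
    using o12 o23 by (auto simp: bp m12_def m23_def)
  have s2: "\<sigma>2 \<in> BP S w" and s3: "\<sigma>3 \<in> BP S w" using bp by auto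
  have d01: "V0 \<noteq> V1"
  proof
    assume "V0 = V1"
    show False by (rule not_same[OF _ _ mV0 _ nb(1,2) s1, of ]) (use \<open>V0 = V1\<close> mV1 o12 in \<open>auto simp: m12_def\<close>)
  qed
  have d12: "V1 \<noteq> V2"
  proof
    assume "V1 = V2"
    show False by (rule not_same[OF _ _ mV1 _ nb(2,3) s2]) (use \<open>V1 = V2\<close> mV2 o12 o23 in \<open>auto simp: m12_def m23_def\<close>)
  qed
  have d23: "V2 \<noteq> V3"
  proof
    assume "V2 = V3"
    show False by (rule not_same[OF _ _ mV2 _ nb(3,4) s3]) (use \<open>V2 = V3\<close> mV3 o23 in \<open>auto simp: m23_def\<close>)
  qed
  have "V0 \<le> V1" by (rule mx_mono[OF mV0 mV1]) (use o12 in \<open>simp add: m12_def\<close>)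
  then have l01: "V0 < V1" using d01 by simp
  have "V1 \<le> V2" by (rule mx_mono[OF mV1 mV2]) (use o12 o23 in \<open>simp add: m12_def m23_def\<close>)
  then have l12: "V1 < V2" using d12 by simp
  have "V2 \<le> V3" by (rule mx_mono[OF mV2 mV3]) (use o23 in \<open>simp add: m23_def\<close>)
  then have l23: "V2 < V3" using d23 by simp
  have VS: "{V0, V1, V2, V3} \<subseteq> S" using mV0 mV1 mV2 mV3 unfolding mx_def by auto
  have c4: "card {V0, V1, V2, V3} = 4" using l01 l12 l23 by auto
  have cS: "card S \<ge> 4" using card_mono[OF fin VS] c4 by simp
  define lam where "lam = ln (3::real)"
  define L where "L = ln (real (card S) - 1)"
  have lam0: "lam > 0" unfolding lam_def by simp
  have Llam: "L \<ge> lam" unfolding L_def lam_def using cS by (subst ln_le_cancel_iff) auto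
  define g1 where "g1 = \<sigma>2 - \<sigma>1"
  define g2 where "g2 = \<sigma>3 - \<sigma>2"
  have end_dom: "dm S w (\<sigma>3 + 3/4) V3"
    by (rule dm_end[OF fin _ top, where x="3/4"]) (use V3c exp34 in auto)
  have goal: "\<exists>u k. \<sigma> < u \<and> u \<le> \<sigma> + 1 + 3 * L \<and> dm S w u k"
  proof -
    have int2: "\<exists>u. \<sigma>2 < u \<and> u \<le> \<sigma>2 + lam + 1/2 \<and> dm S w u V2" if "g2 > 2 * lam"
      using interior_dom[OF fin V2c[of \<sigma>2] V2c[of \<sigma>3]] that o23 unfolding g2_def lam_def by auto
    have int1: "\<exists>u. \<sigma>1 < u \<and> u \<le> \<sigma>1 + lam + 1/2 \<and> dm S w u V1" if "g1 > 2 * lam"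
      using interior_dom[OF fin V1c[of \<sigma>1] V1c[of \<sigma>2]] that o12 unfolding g1_def lam_def by auto
    have "\<sigma> = \<sigma>1 \<or> \<sigma> = \<sigma>2 \<or> \<sigma> = \<sigma>3" using sig bp by auto
    moreover
    { assume "\<sigma> = \<sigma>3"
      then have ?thesis using end_dom lam0 Llam by (intro exI[of _ "\<sigma>3 + 3/4"] exI[of _ V3]) auto }
    moreover
    { assume sg: "\<sigma> = \<sigma>2"
      have ?thesis
      proof (cases "g2 > 2 * lam")
        case True
        then obtain u where "\<sigma>2 < u" "u \<le> \<sigma>2 + lam + 1/2" "dm S w u V2" using int2 by blast
        then show ?thesis using sg lam0 Llam by (intro exI[of _ u] exI[of _ V2]) auto
      next
        case False
        then show ?thesis using end_dom lam0 Llam sg o23 unfolding g2_def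
          by (intro exI[of _ "\<sigma>3 + 3/4"] exI[of _ V3]) auto
      qed }
    moreover
    { assume sg: "\<sigma> = \<sigma>1"
      have ?thesis
      proof (cases "g1 > 2 * lam")
        case True
        then obtain u where "\<sigma>1 < u" "u \<le> \<sigma>1 + lam + 1/2" "dm S w u V1" using int1 by blast
        then show ?thesis using sg lam0 Llam by (intro exI[of _ u] exI[of _ V1]) auto
      next
        case g1le: False
        show ?thesis
        proof (cases "g2 > 2 * lam")
          case True
          then obtain u where "\<sigma>2 < u" "u \<le> \<sigma>2 + lam + 1/2" "dm S w u V2" using int2 by blast
          then show ?thesis using sg lam0 Llam g1le o12 unfolding g1_def by (intro exI[of _ u] exI[of _ V2]) auto
        next
          case g2le: False
          show ?thesis
          proof (cases "card S \<ge> 5")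
            case True
            have "L \<ge> ln 4" unfolding L_def using True by (subst ln_le_cancel_iff) auto
            then have "4 * lam + 3/4 \<le> 1 + 3 * L" using ln_merged unfolding lam_def by linarith
            then show ?thesis using end_dom sg g1le g2le o12 o23 unfolding g1_def g2_def
              by (intro exI[of _ "\<sigma>3 + 3/4"] exI[of _ V3]) auto
          next
            case False
            then have "card S = 4" using cS by simp
            then have S4: "S = {V0, V1, V2, V3}" using card_subset_eq[OF fin VS] c4 by simp
            have eqmx: "ell w a v = ell w b v" if "mx S w v a" "mx S w v b" for a b v
              using that unfolding mx_def by (meson order_antisym)
            have e1: "ell w V0 \<sigma>1 = ell w V1 \<sigma>1" using eqmx[OF V0c V1c[of \<sigma>1]] o12 by simp
            have e2: "ell w V1 \<sigma>2 = ell w V2 \<sigma>2" using eqmx[OF V1c[of \<sigma>2] V2c[of \<sigma>2]] o12 o23 by simp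
            have e3: "ell w V2 \<sigma>3 = ell w V3 \<sigma>3" using eqmx[OF V2c[of \<sigma>3] V3c[of \<sigma>3]] o23 by simp
            have dist: "V0 \<noteq> V1" "V0 \<noteq> V2" "V0 \<noteq> V3" "V1 \<noteq> V2" "V1 \<noteq> V3" "V2 \<noteq> V3"
              using l01 l12 l23 by auto
            have cr: "ell w a u - ell w b u = real_of_int (a - b) * (u - c)" if "ell w a c = ell w b c" for a b u c
              using ell_diff[of w a u b c] that by simp
            show ?thesis
            proof (cases "g1 + g2 \<le> 3 * lam")
              case True
              define u where "u = \<sigma>3 + 1"
              have A2: "ell w V2 u - ell w V3 u \<le> - 1"
                using cr[OF e3, of u] mneg[OF l23, of "u - \<sigma>3"] unfolding u_def by simp
              have A1: "ell w V1 u - ell w V2 u \<le> - 1"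
                using cr[OF e2, of u] mneg[OF l12, of "u - \<sigma>2"] o23 unfolding u_def by simp
              have A0: "ell w V0 u - ell w V1 u \<le> 0"
                using cr[OF e1, of u] mneg[OF l01, of "u - \<sigma>1"] o12 o23 unfolding u_def by simp
              have "dm S w u V3"
                by (rule dm4[OF S4, where p=2 and q=2 and r=1]) (use dist A0 A1 A2 numA in \<open>auto simp: algebra_simps\<close>)
              moreover have "u \<le> \<sigma>1 + 1 + 3 * L" using True Llam unfolding u_def g1_def g2_def by simp
              ultimately show ?thesis using sg o12 o23 by (intro exI[of _ u] exI[of _ V3]) (auto simp: u_def)
            next
              case big: False
              show ?thesis
              proof (cases "g1 \<le> g2")
                case True
                define u where "u = \<sigma>2 + g2 / 2"
                have g2pos: "g2 > 0" using o23 unfolding g2_def by simp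
                have hu2: "u - \<sigma>2 = g2/2" "u - \<sigma>2 \<ge> 0" unfolding u_def g1_def g2_def by (insert o12 o23, auto simp: field_simps)+
                have hu3: "u - \<sigma>3 = - (g2/2)" "u - \<sigma>3 \<le> 0" unfolding u_def g2_def g1_def g2_def by (insert o12 o23, auto simp: field_simps)+
                have hu1: "u - \<sigma>1 = g1 + g2/2" "u - \<sigma>1 \<ge> 0" unfolding u_def g1_def g1_def g2_def by (insert o12 o23, auto simp: field_simps)+
                have B1: "ell w V1 u - ell w V2 u \<le> - (g2/2)"
                  using cr[OF e2, of u] mneg[OF l12 hu2(2)] hu2(1) by linarith
                have B3: "ell w V3 u - ell w V2 u \<le> - (g2/2)"
                  using cr[OF e3[symmetric], of u] mneg2[OF l23 hu3(2)] hu3(1) by linarith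
                have B0: "ell w V0 u - ell w V1 u \<le> - (g1 + g2/2)"
                  using cr[OF e1, of u] mneg[OF l01 hu1(2)] hu1(1) by linarith
                have "dm S w u V2"
                proof (rule dm4[where a=V0 and b=V1 and c=V3 and p="g1+g2" and q="g2/2" and r="g2/2"])
                  show "S = {V0, V1, V3, V2}" using S4 by auto
                  have "2 * exp (- (g2/2)) + exp (- (g1+g2)) < 1"
                    using numB[of g2 "g1+g2"] big True unfolding lam_def by simp
                  then show "exp (- (g1 + g2)) + exp (- (g2 / 2)) + exp (- (g2 / 2)) < 1" by simp
                qed (use dist B0 B1 B3 in \<open>auto simp: algebra_simps\<close>)
                moreover have "u \<le> \<sigma>1 + 1 + 3 * L" using hu1(1) True g2le Llam lam0 by linarith
                ultimately show ?thesis using sg o12 g2pos by (intro exI[of _ u] exI[of _ V2]) (auto simp: u_def)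
              next
                case False
                define u where "u = \<sigma>1 + g1 / 2"
                have g1pos: "g1 > 0" using o12 unfolding g1_def by simp
                have hu1: "u - \<sigma>1 = g1/2" "u - \<sigma>1 \<ge> 0" unfolding u_def g1_def g2_def by (insert o12 o23, auto simp: field_simps)+
                have hu2: "u - \<sigma>2 = - (g1/2)" "u - \<sigma>2 \<le> 0" unfolding u_def g1_def g1_def g2_def by (insert o12 o23, auto simp: field_simps)+
                have hu3: "u - \<sigma>3 = - (g1/2 + g2)" "u - \<sigma>3 \<le> 0" unfolding u_def g1_def g2_def g1_def g2_def by (insert o12 o23, auto simp: field_simps)+
                have C0: "ell w V0 u - ell w V1 u \<le> - (g1/2)"
                  using cr[OF e1, of u] mneg[OF l01 hu1(2)] hu1(1) by linarith
                have C2: "ell w V2 u - ell w V1 u \<le> - (g1/2)"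
                  using cr[OF e2[symmetric], of u] mneg2[OF l12 hu2(2)] hu2(1) by linarith
                have C3: "ell w V3 u - ell w V2 u \<le> - (g1/2 + g2)"
                  using cr[OF e3[symmetric], of u] mneg2[OF l23 hu3(2)] hu3(1) by linarith
                have "dm S w u V1"
                proof (rule dm4[where a=V0 and b=V2 and c=V3 and p="g1/2" and q="g1/2" and r="g1+g2"])
                  show "S = {V0, V2, V3, V1}" using S4 by auto
                  have "2 * exp (- (g1/2)) + exp (- (g1+g2)) < 1"
                    using numB[of g1 "g1+g2"] big False unfolding lam_def by simp
                  then show "exp (- (g1 / 2)) + exp (- (g1 / 2)) + exp (- (g1 + g2)) < 1" by simp
                qed (use dist C0 C2 C3 in \<open>auto simp: algebra_simps\<close>)
                moreover have "u \<le> \<sigma>1 + 1 + 3 * L" using hu1(1) g1le Llam lam0 by linarith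
                ultimately show ?thesis using sg g1pos by (intro exI[of _ u] exI[of _ V1]) (auto simp: u_def)
              qed
            qed
          qed
        qed
      qed }
    ultimately show ?thesis by blast
  qed
  then show ?thesis unfolding L_def .
qed



lemma mirror_ell: "ell (\<lambda>i. w (- i)) j v = ell w (- j) (- v)"
  unfolding ell_def by simp

lemma mx_mirror: "mx (uminus ` S) (\<lambda>i. w (- i)) v j \<longleftrightarrow> mx S w (- v) (- j)"
  unfolding mx_def mirror_ell
proof
  assume a: "j \<in> uminus ` S \<and> (\<forall>j'\<in>uminus ` S. ell w (- j') (- v) \<le> ell w (- j) (- v))"
  then show "- j \<in> S \<and> (\<forall>ja\<in>S. ell w ja (- v) \<le> ell w (- j) (- v))"
    by (metis (no_types, lifting) image_iff minus_minus)
next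
  assume a: "- j \<in> S \<and> (\<forall>ja\<in>S. ell w ja (- v) \<le> ell w (- j) (- v))"
  then show "j \<in> uminus ` S \<and> (\<forall>j'\<in>uminus ` S. ell w (- j') (- v) \<le> ell w (- j) (- v))"
    by (auto simp: image_iff) (metis minus_minus)
qed

lemma BP_mirror: "v \<in> BP (uminus ` S) (\<lambda>i. w (- i)) \<longleftrightarrow> - v \<in> BP S w"
proof
  assume "v \<in> BP (uminus ` S) (\<lambda>i. w (- i))"
  then obtain i j where "i \<noteq> j" "mx S w (- v) (- i)" "mx S w (- v) (- j)" unfolding BP_def mx_mirror by auto
  moreover have "- i \<noteq> - j" using \<open>i \<noteq> j\<close> by simp
  ultimately show "- v \<in> BP S w" unfolding BP_def by blast
next
  assume "- v \<in> BP S w"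
  then obtain i j where "i \<noteq> j" "mx S w (- v) i" "mx S w (- v) j" unfolding BP_def by auto
  then have "- i \<noteq> - j" "mx S w (- v) (- (- i))" "mx S w (- v) (- (- j))" by simp_all
  then show "v \<in> BP (uminus ` S) (\<lambda>i. w (- i))" unfolding BP_def mx_mirror by blast
qed

lemma dm_mirror: "dm (uminus ` S) (\<lambda>i. w (- i)) v j \<longleftrightarrow> dm S w (- v) (- j)"
proof -
  have e: "uminus ` S - {j} = uminus ` (S - {- j})" using image_set_diff[of uminus S "{- j}"] by (simp add: inj_def)
  have "(\<Sum>i\<in>uminus ` S - {j}. exp (ell (\<lambda>i. w (- i)) i v)) = (\<Sum>i\<in>uminus ` (S - {- j}). exp (ell (\<lambda>i. w (- i)) i v))"
    unfolding e ..
  also have "\<dots> = (\<Sum>i\<in>S - {- j}. exp (ell w i (- v)))"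
    by (subst sum.reindex) (auto simp: inj_on_def mirror_ell)
  finally have s: "(\<Sum>i\<in>uminus ` S - {j}. exp (ell (\<lambda>i. w (- i)) i v)) = (\<Sum>i\<in>S - {- j}. exp (ell w i (- v)))" .
  have m: "j \<in> uminus ` S \<longleftrightarrow> - j \<in> S" by (auto simp: image_iff) (metis minus_minus)
  show ?thesis unfolding dm_def s m by (simp add: mirror_ell)
qed

lemma card3_sorted:
  fixes A :: "real set"
  assumes "card A = 3"
  shows "\<exists>a b c. A = {a, b, c} \<and> a < b \<and> b < c"
proof -
  obtain x y z where xyz: "A = {x, y, z}" "x \<noteq> y" "x \<noteq> z" "y \<noteq> z" using assms card_3_iff by metis
  have "(x<y \<and> y<z) \<or> (x<z \<and> z<y) \<or> (y<x \<and> x<z) \<or> (y<z \<and> z<x) \<or> (z<x \<and> x<y) \<or> (z<y \<and> y<x)"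
    using xyz by (metis linorder_neqE_linordered_idom order.strict_trans)
  then show ?thesis
  proof (elim disjE)
    assume "x<y \<and> y<z" then show ?thesis using xyz(1) by blast
  next
    assume "x<z \<and> z<y" then show ?thesis using xyz(1) by (intro exI[of _ x] exI[of _ z] exI[of _ y]) auto
  next
    assume "y<x \<and> x<z" then show ?thesis using xyz(1) by (intro exI[of _ y] exI[of _ x] exI[of _ z]) auto
  next
    assume "y<z \<and> z<x" then show ?thesis using xyz(1) by (intro exI[of _ y] exI[of _ z] exI[of _ x]) auto
  next
    assume "z<x \<and> x<y" then show ?thesis using xyz(1) by (intro exI[of _ z] exI[of _ x] exI[of _ y]) auto
  next
    assume "z<y \<and> y<x" then show ?thesis using xyz(1) by (intro exI[of _ z] exI[of _ y] exI[of _ x]) auto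
  qed
qed

lemma core_both:
  fixes S :: "int set" and w :: "int \<Rightarrow> real"
  assumes fin: "finite S" and c3: "card (BP S w) = 3" and sig: "\<sigma> \<in> BP S w"
  shows "\<exists>u u' k k'. u < \<sigma> \<and> \<sigma> < u' \<and> \<sigma> - u \<le> 1 + 3 * ln (real (card S) - 1) \<and>
     u' - \<sigma> \<le> 1 + 3 * ln (real (card S) - 1) \<and> dm S w u k \<and> dm S w u' k'"
proof -
  obtain s1 s2 s3 where bp: "BP S w = {s1, s2, s3}" and o: "s1 < s2" "s2 < s3"
    using card3_sorted[OF c3] by blast
  obtain u' k' where r: "\<sigma> < u'" "u' \<le> \<sigma> + 1 + 3 * ln (real (card S) - 1)" "dm S w u' k'"
    using core_right[OF fin bp o sig] by blast
  define S' where "S' = uminus ` S"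
  define w' where "w' = (\<lambda>i. w (- i))"
  have fin': "finite S'" unfolding S'_def using fin by simp
  have cS: "card S' = card S" unfolding S'_def by (rule card_image) (simp add: inj_on_def)
  have bp': "BP S' w' = {- s3, - s2, - s1}"
  proof (rule set_eqI)
    fix v show "v \<in> BP S' w' \<longleftrightarrow> v \<in> {- s3, - s2, - s1}"
      unfolding S'_def w'_def BP_mirror bp by auto
  qed
  have sig': "- \<sigma> \<in> BP S' w'" unfolding S'_def w'_def BP_mirror using sig by simp
  obtain v k where l: "- \<sigma> < v" "v \<le> - \<sigma> + 1 + 3 * ln (real (card S') - 1)" "dm S' w' v k"
    using core_right[OF fin' bp' _ _ sig'] o by auto
  have "dm S w (- v) (- k)" using l(3) unfolding S'_def w'_def dm_mirror .
  then show ?thesis using r l cS by (intro exI[of _ "- v"] exI[of _ u'] exI[of _ "- k"] exI[of _ k']) auto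
qed



lemma hull_le:
  fixes a :: "'a::real_inner"
  assumes "\<forall>x\<in>X. inner a x \<le> M" "r \<in> convex hull X"
  shows "inner a r \<le> M"
proof -
  have "convex hull X \<subseteq> {x. inner a x \<le> M}"
    by (rule hull_minimal) (use assms(1) convex_halfspace_le in auto)
  then show ?thesis using assms(2) by auto
qed

lemma hull_unique_max:
  fixes a :: "'a::real_inner"
  assumes fin: "finite X" and x0: "x0 \<in> X" "inner a x0 = M" and lt: "\<forall>x\<in>X-{x0}. inner a x < M"
    and r: "r \<in> convex hull X" and rM: "inner a r \<ge> M"
  shows "r = x0"
proof -
  obtain \<mu> where \<mu>: "\<forall>x\<in>X. 0 \<le> \<mu> x" "sum \<mu> X = 1" "(\<Sum>x\<in>X. \<mu> x *\<^sub>R x) = r"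
    using r unfolding convex_hull_finite[OF fin] by blast
  have ir: "inner a r = (\<Sum>x\<in>X. \<mu> x * inner a x)"
    unfolding \<mu>(3)[symmetric] by (simp add: inner_sum_right)
  have "(\<Sum>x\<in>X. \<mu> x * (M - inner a x)) = M * sum \<mu> X - (\<Sum>x\<in>X. \<mu> x * inner a x)"
    by (simp add: right_diff_distrib sum_subtractf sum_distrib_left mult.commute)
  then have "(\<Sum>x\<in>X. \<mu> x * (M - inner a x)) = M - inner a r" unfolding ir \<mu>(2) by simp
  then have s0: "(\<Sum>x\<in>X. \<mu> x * (M - inner a x)) \<le> 0" using rM by simp
  have nn: "\<And>x. x \<in> X \<Longrightarrow> 0 \<le> \<mu> x * (M - inner a x)"
  proof -
    fix x assume "x \<in> X"
    moreover have "inner a x \<le> M" if "x \<in> X" for x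
    proof (cases "x = x0")
      case True then show ?thesis using x0 by simp
    next
      case False then have "x \<in> X - {x0}" using that by simp
      then have "inner a x < M" using lt by blast
      then show ?thesis by simp
    qed
    ultimately show "0 \<le> \<mu> x * (M - inner a x)" using \<mu>(1) by simp
  qed
  have "0 \<le> (\<Sum>x\<in>X. \<mu> x * (M - inner a x))" by (rule sum_nonneg) (rule nn)
  then have "(\<Sum>x\<in>X. \<mu> x * (M - inner a x)) = 0" using s0 by linarith
  then have z: "\<forall>x\<in>X. \<mu> x * (M - inner a x) = 0" using sum_nonneg_eq_0_iff[of X "\<lambda>x. \<mu> x * (M - inner a x)"] fin nn by blast
  have mz: "\<mu> x = 0" if "x \<in> X - {x0}" for x
  proof -
    have "inner a x < M" using lt that by blast
    moreover have "\<mu> x * (M - inner a x) = 0" using z that by blast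
    ultimately show ?thesis by simp
  qed
  have "(\<Sum>x\<in>X. \<mu> x *\<^sub>R x) = \<mu> x0 *\<^sub>R x0"
    by (rule sum.mono_neutral_left[where S="{x0}", simplified, symmetric]) (use fin x0 mz in auto)
  moreover have "sum \<mu> X = \<mu> x0"
    by (rule sum.mono_neutral_left[where S="{x0}", simplified, symmetric]) (use fin x0 mz in auto)
  ultimately show ?thesis using \<mu> by simp
qed

definition SS :: "complex poly \<Rightarrow> int set" where "SS f = int ` supp f"
definition WW :: "complex poly \<Rightarrow> int \<Rightarrow> real" where "WW f i = ln (cmod (coeff f (nat i)))"

lemma finite_supp: "finite (supp f)"
proof -
  have "supp f \<subseteq> {..degree f}" unfolding supp_def using le_degree by auto
  then show ?thesis using finite_subset by blast
qed

lemma phi_inner: "v * fst r - snd r = inner (v, -1::real) (r :: real \<times> real)"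
  by (cases r) (simp add: inner_prod_def)

lemma ell_point: "ell (WW f) (int i) v = inner (v, -1::real) (real i, - ln (cmod (coeff f i)))"
  unfolding ell_def WW_def by (simp add: inner_prod_def)



lemma ArchTrop_BP: "ArchTrop f = BP (SS f) (WW f)"
proof (rule set_eqI)
  fix v :: real
  define P where "P i = (real i, - ln (cmod (coeff f i)))" for i
  define X where "X = P ` supp f"
  define a where "a = (v, -1::real)"
  have H: "ArchNewt f = convex hull X" unfolding ArchNewt_def X_def P_def ..
  have finX: "finite X" unfolding X_def using finite_supp by simp
  have ellP: "ell (WW f) (int i) v = inner a (P i)" for i unfolding a_def P_def ell_point ..
  have injP: "P i = P j \<Longrightarrow> i = j" for i j unfolding P_def by simp
  show "v \<in> ArchTrop f \<longleftrightarrow> v \<in> BP (SS f) (WW f)"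
  proof
    assume "v \<in> ArchTrop f"
    then have "\<exists>p\<in>convex hull X. \<exists>q\<in>convex hull X. p \<noteq> q \<and> (\<forall>r\<in>convex hull X. inner a r \<le> inner a p) \<and> (\<forall>r\<in>convex hull X. inner a r \<le> inner a q)"
      unfolding ArchTrop_def H a_def by (simp only: phi_inner mem_Collect_eq)
    then obtain p q where pq: "p \<in> convex hull X" "q \<in> convex hull X" "p \<noteq> q"
      "\<forall>r\<in>convex hull X. inner a r \<le> inner a p" "\<forall>r\<in>convex hull X. inner a r \<le> inner a q"
      by blast
    define M where "M = inner a p"
    have Xne: "X \<noteq> {}" using pq(1) by auto
    define M' where "M' = Max ((inner a) ` X)"
    have "M' \<in> (inner a) ` X" unfolding M'_def using finX Xne by simp
    then obtain x1 where x1: "x1 \<in> X" "inner a x1 = M'" by auto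
    have le': "\<forall>x\<in>X. inner a x \<le> M'" unfolding M'_def using finX by simp
    have "M \<le> M'" unfolding M_def using hull_le[OF le' pq(1)] .
    moreover have "M' \<le> M" using pq(4) x1 hull_inc[of x1 X] unfolding M_def by auto
    ultimately have MM: "M' = M" by simp
    have qM: "inner a q = M" using pq unfolding M_def by (meson order_antisym)
    obtain x2 where x2: "x2 \<in> X" "x2 \<noteq> x1" "inner a x2 = M"
    proof (rule ccontr)
      assume "\<not> thesis"
      then have lt: "\<forall>x\<in>X-{x1}. inner a x < M" using that le' MM by force
      have "p = x1" by (rule hull_unique_max[OF finX x1(1) _ lt pq(1)]) (use x1 MM M_def in auto)
      moreover have "q = x1" by (rule hull_unique_max[OF finX x1(1) _ lt pq(2)]) (use x1 MM qM in auto)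
      ultimately show False using pq(3) by simp
    qed
    obtain i where i: "i \<in> supp f" "x1 = P i" using x1 unfolding X_def by auto
    obtain j where j: "j \<in> supp f" "x2 = P j" using x2 unfolding X_def by auto
    have ij: "i \<noteq> j" using i j x2 by auto
    have mxi: "mx (SS f) (WW f) v (int k)" if "k \<in> supp f" "inner a (P k) = M" for k
      unfolding mx_def SS_def
    proof (intro conjI ballI)
      show "int k \<in> int ` supp f" using that by simp
      fix j' assume "j' \<in> int ` supp f"
      then obtain m where m: "m \<in> supp f" "j' = int m" by auto
      show "ell (WW f) j' v \<le> ell (WW f) (int k) v"
        unfolding m(2) ellP using le' m(1) MM that unfolding X_def by auto
    qed
    have "mx (SS f) (WW f) v (int i)" using mxi[OF i(1)] i x1 MM by simp
    moreover have "mx (SS f) (WW f) v (int j)" using mxi[OF j(1)] j x2 by simp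
    moreover have "int i \<noteq> int j" using ij by simp
    ultimately show "v \<in> BP (SS f) (WW f)" unfolding BP_def by blast
  next
    assume "v \<in> BP (SS f) (WW f)"
    then obtain i' j' where ij: "i' \<noteq> j'" "mx (SS f) (WW f) v i'" "mx (SS f) (WW f) v j'" unfolding BP_def by auto
    obtain i where i: "i \<in> supp f" "i' = int i" using ij(2) unfolding mx_def SS_def by auto
    obtain j where j: "j \<in> supp f" "j' = int j" using ij(3) unfolding mx_def SS_def by auto
    have allle: "\<forall>x\<in>X. inner a x \<le> inner a (P k)" if "mx (SS f) (WW f) v (int k)" for k
    proof
      fix x assume "x \<in> X"
      then obtain m where "m \<in> supp f" "x = P m" unfolding X_def by auto
      then have "ell (WW f) (int m) v \<le> ell (WW f) (int k) v" using that unfolding mx_def SS_def by auto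
      then show "inner a x \<le> inner a (P k)" unfolding ellP \<open>x = P m\<close> .
    qed
    have Pi: "P i \<in> convex hull X" "P j \<in> convex hull X" unfolding X_def using i j by (auto intro: hull_inc)
    have "P i \<noteq> P j" using injP ij(1) i j by auto
    moreover have "\<forall>r\<in>convex hull X. inner a r \<le> inner a (P i)"
      using hull_le[OF allle] ij(2) i by simp
    moreover have "\<forall>r\<in>convex hull X. inner a r \<le> inner a (P j)"
      using hull_le[OF allle] ij(3) j by simp
    ultimately have "\<exists>p\<in>convex hull X. \<exists>q\<in>convex hull X. p \<noteq> q \<and> (\<forall>r\<in>convex hull X. inner a r \<le> inner a p) \<and> (\<forall>r\<in>convex hull X. inner a r \<le> inner a q)"
      using Pi by blast
    then show "v \<in> ArchTrop f" unfolding ArchTrop_def H a_def by (simp only: phi_inner mem_Collect_eq)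
  qed
qed



lemma poly_supp: "poly f y = (\<Sum>m\<in>supp f. coeff f m * y ^ m)"
proof -
  have "poly f y = (\<Sum>m\<le>degree f. coeff f m * y ^ m)" by (rule poly_altdef)
  also have "\<dots> = (\<Sum>m\<in>supp f. coeff f m * y ^ m)"
    by (rule sum.mono_neutral_right) (auto simp: supp_def le_degree)
  finally show ?thesis .
qed

lemma dm_poly:
  assumes d: "dm (SS f) (WW f) u k"
  shows "\<exists>n. k = int n \<and> coeff f n \<noteq> 0 \<and>
     (\<forall>y. norm y = exp u \<longrightarrow> norm (poly f y - coeff f n * y ^ n) < norm (coeff f n * y ^ n))"
proof -
  have kS: "k \<in> SS f" using d unfolding dm_def by auto
  then obtain n where n: "n \<in> supp f" "k = int n" unfolding SS_def by auto
  have cn: "coeff f n \<noteq> 0" using n unfolding supp_def by auto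
  have ex: "exp (ell (WW f) (int m) u) = cmod (coeff f m) * exp u ^ m" if "m \<in> supp f" for m
  proof -
    have c: "cmod (coeff f m) > 0" using that unfolding supp_def by auto
    have "exp (ell (WW f) (int m) u) = exp (ln (cmod (coeff f m))) * exp (real m * u)"
      unfolding ell_def WW_def by (simp add: exp_add)
    also have "\<dots> = cmod (coeff f m) * exp u ^ m" using c by (simp add: exp_of_nat_mult)
    finally show ?thesis .
  qed
  have e: "SS f - {k} = int ` (supp f - {n})" unfolding SS_def n(2) by auto
  have "(\<Sum>i\<in>SS f - {k}. exp (ell (WW f) i u)) = (\<Sum>m\<in>supp f - {n}. exp (ell (WW f) (int m) u))"
    unfolding e by (subst sum.reindex) (auto simp: inj_on_def)
  also have "\<dots> = (\<Sum>m\<in>supp f - {n}. cmod (coeff f m) * exp u ^ m)"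
    by (rule sum.cong) (auto simp: ex)
  finally have lt: "(\<Sum>m\<in>supp f - {n}. cmod (coeff f m) * exp u ^ m) < cmod (coeff f n) * exp u ^ n"
    using d ex[OF n(1)] unfolding dm_def n(2) by simp
  show ?thesis
  proof (intro exI[of _ n] conjI allI impI)
    show "k = int n" by fact
    show "coeff f n \<noteq> 0" by fact
    fix y :: complex assume y: "norm y = exp u"
    have "poly f y = coeff f n * y ^ n + (\<Sum>m\<in>supp f - {n}. coeff f m * y ^ m)"
      unfolding poly_supp using n(1) finite_supp by (simp add: sum.remove)
    then have "norm (poly f y - coeff f n * y ^ n) = norm (\<Sum>m\<in>supp f - {n}. coeff f m * y ^ m)" by simp
    also have "\<dots> \<le> (\<Sum>m\<in>supp f - {n}. norm (coeff f m * y ^ m))" by (rule norm_sum)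
    also have "\<dots> = (\<Sum>m\<in>supp f - {n}. cmod (coeff f m) * exp u ^ m)" using y by (simp add: norm_mult norm_power)
    also have "\<dots> < cmod (coeff f n) * exp u ^ n" by (rule lt)
    also have "\<dots> = norm (coeff f n * y ^ n)" using y by (simp add: norm_mult norm_power)
    finally show "norm (poly f y - coeff f n * y ^ n) < norm (coeff f n * y ^ n)" .
  qed
qed

lemma root_between:
  fixes f :: "complex poly"
  assumes f0: "f \<noteq> 0" and r: "0 < r" "r < r'" and ck: "ck \<noteq> 0" and ck': "ck' \<noteq> 0"
    and d1: "\<And>y. norm y = r \<Longrightarrow> norm (poly f y - ck * y ^ k) < norm (ck * y ^ k)"
    and d2: "\<And>y. norm y = r' \<Longrightarrow> norm (poly f y - ck' * y ^ k') < norm (ck' * y ^ k')"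
    and kk: "k \<noteq> k'"
  shows "\<exists>z. poly f z = 0 \<and> r \<le> norm z \<and> norm z \<le> r'"
proof (rule ccontr)
  assume no: "\<not> ?thesis"
  obtain c as where c: "c \<noteq> 0" "\<forall>a\<in>set as. poly f a = 0" "\<forall>y. poly f y = c * prod_list (map (\<lambda>a. y - a) as)"
    using poly_factor_list[OF f0] by blast
  have nr: "norm a < r \<or> norm a > r'" if "a \<in> set as" for a
    using no c(2) that by force
  have nr1: "norm a \<noteq> r" if "a \<in> set as" for a using nr[OF that] r by auto
  have nr2: "norm a \<noteq> r'" if "a \<in> set as" for a using nr[OF that] r by auto
  have r'0: "0 < r'" using r by simp
  have "k = length (filter (\<lambda>a. norm a < r) as)"
    using dom_count[OF r(1) ck c(1) c(3)[rule_format] nr1 d1] .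
  moreover have "k' = length (filter (\<lambda>a. norm a < r') as)"
    using dom_count[OF r'0 ck' c(1) c(3)[rule_format] nr2 d2] .
  moreover have "filter (\<lambda>a. norm a < r) as = filter (\<lambda>a. norm a < r') as"
    by (rule filter_cong) (use nr r in force)+
  ultimately show False using kk by simp
qed

theorem corollary3p3:
  fixes f :: "complex poly" and t :: nat
  assumes "card (supp f) = t"
    and "card (ArchTrop f) = 3"
  shows "(SUP \<sigma>\<in>ArchTrop f. INF \<rho>\<in>Amoeba f. \<bar>\<rho> - \<sigma>\<bar>) \<le> 1 + 3 * ln (real t - 1)"
proof -
  define D where "D = 1 + 3 * ln (real t - 1)"
  have fin: "finite (SS f)" unfolding SS_def using finite_supp by simp
  have cS: "card (SS f) = t" unfolding SS_def using assms(1) by (subst card_image) (auto simp: inj_on_def)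
  have c3: "card (BP (SS f) (WW f)) = 3" using assms(2) unfolding ArchTrop_BP .
  have near: "\<exists>\<rho>\<in>Amoeba f. \<bar>\<rho> - \<sigma>\<bar> \<le> D" if sig: "\<sigma> \<in> ArchTrop f" for \<sigma>
  proof -
    have sig': "\<sigma> \<in> BP (SS f) (WW f)" using sig unfolding ArchTrop_BP .
    obtain u u' k k' where uu: "u < \<sigma>" "\<sigma> < u'" "\<sigma> - u \<le> D" "u' - \<sigma> \<le> D"
      and d1: "dm (SS f) (WW f) u k" and d2: "dm (SS f) (WW f) u' k'"
      using core_both[OF fin c3 sig'] unfolding cS D_def by blast
    have kk: "k \<noteq> k'" using dm_distinct[OF fin sig' uu(1,2) d1 d2] .
    obtain n where n: "k = int n" "coeff f n \<noteq> 0"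
      "\<forall>y. norm y = exp u \<longrightarrow> norm (poly f y - coeff f n * y ^ n) < norm (coeff f n * y ^ n)"
      using dm_poly[OF d1] by blast
    obtain n' where n': "k' = int n'" "coeff f n' \<noteq> 0"
      "\<forall>y. norm y = exp u' \<longrightarrow> norm (poly f y - coeff f n' * y ^ n') < norm (coeff f n' * y ^ n')"
      using dm_poly[OF d2] by blast
    have f0: "f \<noteq> 0" using n(2) by auto
    have "\<exists>z. poly f z = 0 \<and> exp u \<le> norm z \<and> norm z \<le> exp u'"
      by (rule root_between[OF f0 _ _ n(2) n'(2)]) (use n(3) n'(3) kk n(1) n'(1) uu in auto)
    then obtain z where z: "poly f z = 0" "exp u \<le> norm z" "norm z \<le> exp u'" by blast
    have z0: "z \<noteq> 0" using z(2) by (auto simp: not_le[symmetric])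
    have "ln (norm z) \<ge> u" using z(2) z0 by (simp add: ln_ge_iff)
    moreover have "ln (norm z) \<le> u'"
    proof -
      have "ln (norm z) \<le> ln (exp u')" using z(3) z0 by (subst ln_le_cancel_iff) auto
      then show ?thesis by simp
    qed
    moreover have "ln (norm z) \<in> Amoeba f" unfolding Amoeba_def using z(1) z0 by blast
    ultimately show ?thesis using uu by (intro bexI[of _ "ln (norm z)"]) auto
  qed
  have ne: "ArchTrop f \<noteq> {}" using assms(2) by auto
  have "(SUP \<sigma>\<in>ArchTrop f. INF \<rho>\<in>Amoeba f. \<bar>\<rho> - \<sigma>\<bar>) \<le> D"
  proof (rule cSUP_least[OF ne])
    fix \<sigma> assume "\<sigma> \<in> ArchTrop f"
    then obtain \<rho> where \<rho>: "\<rho> \<in> Amoeba f" "\<bar>\<rho> - \<sigma>\<bar> \<le> D" using near by blast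
    have "(INF \<rho>\<in>Amoeba f. \<bar>\<rho> - \<sigma>\<bar>) \<le> \<bar>\<rho> - \<sigma>\<bar>"
      by (rule cINF_lower[OF _ \<rho>(1)]) (auto intro: bdd_belowI[of _ 0])
    then show "(INF \<rho>\<in>Amoeba f. \<bar>\<rho> - \<sigma>\<bar>) \<le> D" using \<rho>(2) by simp
  qed
  then show ?thesis unfolding D_def .
qed

end
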